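(* Let $g\in L_2(\mathbb{R}^d)$ and let $m_0(g):=\sup\{k\ge0: g\in H^k(\mathbb{R}^d)\}$ be its smoothness, and suppose $m_0(g)\in(d/2,+\infty)$. If $g\notin H^{m_0(g)}(\mathbb{R}^d)$, then there exists an increasing positive function $Q:\mathbb{R}_+\to\mathbb{R}_+$ satisfying $\lim_{s\to+\infty}\frac{\log Q(s)}{\log s}=0$ such that $$\int_{\mathbb{R}^d}\frac{|\mathcal{F}(g)(\omega)|^2}{Q(\|\omega\|)}(1+\|\omega\|^2)^{m_0(g)}d\omega\le 1,\qquad \int_{\mathbb{R}^d}\frac{|\mathcal{F}(g)(\omega)|^2}{Q(\|\omega\|)}(1+\|\omega\|^2)^{m_0(g)+\delta}d\omega=\infty\ \ \forall\delta>0.$$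
   Context: $H^k(\mathbb{R}^d)$ (for real $k\ge0$, possibly non-integer) is the Sobolev space of $g\in L_2(\mathbb{R}^d)$ with $\|g\|_{H^k(\mathbb{R}^d)}^2=\int_{\mathbb{R}^d}|\mathcal{F}(g)(\omega)|^2(1+\|\omega\|_2^2)^kd\omega<\infty$, where $\mathcal{F}(g)(\omega)=(2\pi)^{-d/2}\int g(x)e^{-ix^T\omega}dx$. *)

theory Defs
  imports "HOL-Analysis.Analysis"
begin

text \<open>Functions on R^d are modelled as functions on a Euclidean space 'a with d = DIM('a).\<close>

definition square_integrable :: "('a::euclidean_space \<Rightarrow> complex) \<Rightarrow> bool" where
  "square_integrable g \<longleftrightarrow> g \<in> borel_measurable lborel \<and>
     integrable lborel (\<lambda>x. (cmod (g x))\<^sup>2)"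

definition fourier_integral :: "('a::euclidean_space \<Rightarrow> complex) \<Rightarrow> 'a \<Rightarrow> complex" where
  "fourier_integral f \<omega> =
     of_real ((2 * pi) powr (- real DIM('a) / 2)) *
     integral\<^sup>L lborel (\<lambda>x. f x * cis (- (x \<bullet> \<omega>)))"

definition is_L2_fourier :: "('a::euclidean_space \<Rightarrow> complex) \<Rightarrow> ('a \<Rightarrow> complex) \<Rightarrow> bool" where
  "is_L2_fourier g G \<longleftrightarrow> square_integrable G \<and>
     ((\<lambda>R. \<integral>\<^sup>+ \<omega>. ennreal ((cmod (G \<omega> - fourier_integral
          (\<lambda>x. indicator (ball 0 R) x * g x) \<omega>))\<^sup>2) \<partial>lborel) \<longlongrightarrow> 0) at_top"

definition fourier_L2 :: "('a::euclidean_space \<Rightarrow> complex) \<Rightarrow> 'a \<Rightarrow> complex" where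
  "fourier_L2 g = (SOME G. is_L2_fourier g G)"

definition in_sobolev :: "real \<Rightarrow> ('a::euclidean_space \<Rightarrow> complex) \<Rightarrow> bool" where
  "in_sobolev k g \<longleftrightarrow> square_integrable g \<and>
     (\<integral>\<^sup>+ \<omega>. ennreal ((cmod (fourier_L2 g \<omega>))\<^sup>2 * (1 + (norm \<omega>)\<^sup>2) powr k) \<partial>lborel) < \<infinity>"

definition smoothness :: "('a::euclidean_space \<Rightarrow> complex) \<Rightarrow> ereal" where
  "smoothness g = Sup (ereal ` {k. 0 \<le> k \<and> in_sobolev k g})"

end

theory Submission imports Defs begin

lemma nn_integral_le_by_measurable:
  assumes "\<And>u. u \<in> borel_measurable M \<Longrightarrow> (\<And>x. u x \<le> f x) \<Longrightarrow> integral\<^sup>N M u \<le> B"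
  shows "integral\<^sup>N M f \<le> B"
  unfolding nn_integral_def
proof (rule SUP_least)
  fix g assume "g \<in> {g. simple_function M g \<and> g \<le> f}"
  then have g: "simple_function M g" "g \<le> f" by auto
  have "integral\<^sup>S M g = integral\<^sup>N M g" using g(1) by (simp add: nn_integral_eq_simple_integral)
  also have "\<dots> \<le> B" using assms[of g] g borel_measurable_simple_function[OF g(1)]
    by (auto simp: le_fun_def)
  finally show "integral\<^sup>S M g \<le> B" .
qed

lemma nn_integral_cmult_top:
  fixes h :: "'b \<Rightarrow> real"
  assumes "c > 0" "(\<integral>\<^sup>+ x. ennreal (h x) \<partial>M) = \<infinity>" "\<And>x. 0 \<le> h x"
  shows "(\<integral>\<^sup>+ x. ennreal (c * h x) \<partial>M) = \<infinity>"
proof -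
  have "(\<integral>\<^sup>+ x. ennreal (h x) \<partial>M) \<le> ennreal (1/c) * (\<integral>\<^sup>+ x. ennreal (c * h x) \<partial>M)"
  proof (rule nn_integral_le_by_measurable)
    fix u assume u: "u \<in> borel_measurable M" "\<And>x. u x \<le> ennreal (h x)"
    have "integral\<^sup>N M u = (\<integral>\<^sup>+ x. ennreal (1/c) * (ennreal c * u x) \<partial>M)"
      using assms(1) by (simp add: mult.assoc[symmetric] ennreal_mult[symmetric])
    also have "\<dots> = ennreal (1/c) * (\<integral>\<^sup>+ x. (ennreal c * u x) \<partial>M)"
      using u by (simp add: nn_integral_cmult)
    also have "\<dots> \<le> ennreal (1/c) * (\<integral>\<^sup>+ x. ennreal (c * h x) \<partial>M)"
      using u assms by (intro mult_left_mono nn_integral_mono)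
        (auto simp: ennreal_mult intro: mult_left_mono)
    finally show "integral\<^sup>N M u \<le> \<dots>" .
  qed
  then have "ennreal (1/c) * (\<integral>\<^sup>+ x. ennreal (c * h x) \<partial>M) = top"
    using assms(2) by (simp add: top_unique)
  then show ?thesis by (simp add: ennreal_mult_eq_top_iff)
qed

lemma lnlim3: "((\<lambda>s::real. C / ln s) \<longlongrightarrow> 0) at_top"
  by (rule tendsto_divide_0[OF tendsto_const filterlim_at_top_imp_at_infinity[OF ln_at_top]])
lemma lnb: "1 \<le> (s::real) \<Longrightarrow> ln (1 + s\<^sup>2) \<le> ln 2 + 2 * ln s"
proof -
  assume s: "1 \<le> s"
  have "1 + s\<^sup>2 \<le> 2 * s\<^sup>2" using s using mult_mono[OF s s] by (simp add: power2_eq_square)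
  then have "ln (1 + s\<^sup>2) \<le> ln (2 * s\<^sup>2)" by (intro ln_mono) (auto simp: add_pos_nonneg)
  also have "\<dots> = ln 2 + 2 * ln s" using s by (simp add: ln_mult ln_realpow)
  finally show ?thesis .
qed

lemma half_pow_sum: "summable (\<lambda>n::nat. (1/2::real)^Suc n)" "(\<Sum>n. (1/2::real)^Suc n) = 1"
proof -
  show "summable (\<lambda>n::nat. (1/2::real)^Suc n)"
    by (subst power_Suc) (intro summable_mult summable_geometric, simp)
  have "(\<Sum>n. (1/2::real)^Suc n) = (\<Sum>n. (1/2) * (1/2::real)^n)" by simp
  also have "\<dots> = (1/2) * (\<Sum>n. (1/2::real)^n)" by (rule suminf_mult) (simp add: summable_geometric)
  also have "\<dots> = 1" by (simp add: suminf_geometric)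
  finally show "(\<Sum>n. (1/2::real)^Suc n) = 1" .
qed

lemma powr_neg_le1: "0 \<le> x \<Longrightarrow> (1 + r\<^sup>2::real) powr (- x) \<le> 1"
  using ge_one_powr_ge_zero[of "1+r^2" x] by (simp add: powr_minus inverse_le_1_iff)

theorem lemma1:
  fixes g :: "'a::euclidean_space \<Rightarrow> complex"
  assumes "square_integrable g"
    and "ereal (real DIM('a) / 2) < smoothness g"
    and "smoothness g < \<infinity>"
    and "\<not> in_sobolev (real_of_ereal (smoothness g)) g"
  shows "\<exists>Q :: real \<Rightarrow> real.
     mono_on {0..} Q \<and> (\<forall>s\<ge>0. Q s > 0) \<and>
     ((\<lambda>s. ln (Q s) / ln s) \<longlongrightarrow> 0) at_top \<and>
     (\<integral>\<^sup>+ \<omega>. ennreal ((cmod (fourier_L2 g \<omega>))\<^sup>2 / Q (norm \<omega>) *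
        (1 + (norm \<omega>)\<^sup>2) powr real_of_ereal (smoothness g)) \<partial>lborel) \<le> 1 \<and>
     (\<forall>\<delta>>0. (\<integral>\<^sup>+ \<omega>. ennreal ((cmod (fourier_L2 g \<omega>))\<^sup>2 / Q (norm \<omega>) *
        (1 + (norm \<omega>)\<^sup>2) powr (real_of_ereal (smoothness g) + \<delta>)) \<partial>lborel) = \<infinity>)"
proof -
  define m where "m = real_of_ereal (smoothness g)"
  define f where "f = (\<lambda>\<omega>::'a. (cmod (fourier_L2 g \<omega>))\<^sup>2)"
  define p where "p = (\<lambda>\<omega>::'a. 1 + (norm \<omega>)\<^sup>2)"
  define e where "e = (\<lambda>n::nat. 1 / real (Suc n))"
  define c where "c = (\<lambda>n. \<integral>\<^sup>+ \<omega>. ennreal (f \<omega> * p \<omega> powr (m - e n)) \<partial>lborel)"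
  define a where "a = (\<lambda>n. (1/2::real)^(Suc n) / (1 + enn2real (c n)))"
  define S where "S = (\<lambda>r::real. \<Sum>n. a n * (1 + r\<^sup>2) powr (- e n))"
  define Q where "Q = (\<lambda>r. 1 / S r)"
  have f0: "\<And>\<omega>. 0 \<le> f \<omega>" by (simp add: f_def)
  have p1: "\<And>\<omega>. 1 \<le> p \<omega>" by (simp add: p_def)
  have e0: "\<And>n. 0 < e n" by (simp add: e_def)
  have sm: "smoothness g = ereal m"
    using assms(2,3) unfolding m_def by (cases "smoothness g") auto
  have c_fin: "c n < \<infinity>" for n
  proof -
    have "ereal (m - e n) < Sup (ereal ` {k. 0 \<le> k \<and> in_sobolev k g})"
      using sm e0[of n] unfolding smoothness_def by simp
    then obtain k where k: "0 \<le> k" "in_sobolev k g" "m - e n < k"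
      by (auto simp: less_Sup_iff)
    have "c n \<le> (\<integral>\<^sup>+ \<omega>. ennreal (f \<omega> * p \<omega> powr k) \<partial>lborel)"
      unfolding c_def using k(3) f0 p1
      by (intro nn_integral_mono ennreal_leI mult_left_mono powr_mono) auto
    also have "\<dots> < \<infinity>" using k(2) by (simp add: in_sobolev_def f_def p_def)
    finally show ?thesis .
  qed
  have inf: "(\<integral>\<^sup>+ \<omega>. ennreal (f \<omega> * p \<omega> powr m) \<partial>lborel) = \<infinity>"
    using assms(1,4) by (simp add: in_sobolev_def f_def p_def m_def less_top[symmetric])
  have a0: "0 < a n" for n
    unfolding a_def by (simp add: enn2real_nonneg add_pos_nonneg)
  have a_le: "a n \<le> (1/2)^Suc n" for n
  proof -
    have y: "1 \<le> 1 + enn2real (c n)" by simp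
    have "a n \<le> (1/2)^Suc n / 1" unfolding a_def
      by (rule divide_left_mono[OF y]) (auto intro: add_pos_nonneg)
    then show ?thesis by simp
  qed
  have ac: "ennreal (a n) * c n \<le> ennreal ((1/2)^Suc n)" for n
  proof -
    have "c n = ennreal (enn2real (c n))" using c_fin[of n] by (simp add: ennreal_enn2real_if)
    then have "ennreal (a n) * c n = ennreal (a n * enn2real (c n))"
      by (metis a0 ennreal_mult enn2real_nonneg less_imp_le)
    also have "a n * enn2real (c n) \<le> (1/2)^Suc n"
      unfolding a_def by (simp add: divide_le_eq enn2real_nonneg add_pos_nonneg) 
    finally show ?thesis by (simp add: ennreal_leI)
  qed
  have term0: "0 \<le> a n * (1 + r\<^sup>2) powr (- e n)" for n r using a0[of n] by simp
  have term_le: "a n * (1 + r\<^sup>2) powr (- e n) \<le> (1/2)^Suc n" for n r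
    using a_le[of n] a0[of n] powr_neg_le1[of "e n" r] e0[of n]
    by (meson less_imp_le mult_left_le order_trans)
  have summ: "summable (\<lambda>n. a n * (1 + r\<^sup>2) powr (- e n))" for r
    by (rule summable_comparison_test[OF _ half_pow_sum(1)]) (use term0 term_le in auto)
  have S_le1: "S r \<le> 1" for r
    unfolding S_def using suminf_le[OF term_le summ half_pow_sum(1)] half_pow_sum(2) by simp
  have S_ge: "a n * (1 + r\<^sup>2) powr (- e n) \<le> S r" for n r
    unfolding S_def using sum_le_suminf[OF summ, of "{n}" r] term0 by simp
  have nz: "(1 + r\<^sup>2::real) \<noteq> 0" for r by (smt (verit) zero_le_power2)
  have pw: "0 < (1 + r\<^sup>2::real) powr y" for r y using nz[of r] by simp
  have S_pos: "0 < S r" for r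
    unfolding S_def by (rule suminf_pos[OF summ]) (use a0 pw in simp)
  have Q_pos: "0 < Q r" for r using S_pos[of r] by (simp add: Q_def)
  have Q_ge1: "1 \<le> Q r" for r using S_pos[of r] S_le1[of r] by (simp add: Q_def)
  have S_anti: "S r' \<le> S r" if "0 \<le> r" "r \<le> r'" for r r'
    unfolding S_def
  proof (rule suminf_le[OF _ summ summ])
    fix n
    have "1 + r\<^sup>2 \<le> 1 + r'\<^sup>2" using that by (simp add: power_mono)
    then have "(1 + r'\<^sup>2) powr (- e n) \<le> (1 + r\<^sup>2) powr (- e n)"
      using e0[of n] by (intro powr_mono2') (auto simp: add_pos_nonneg)
    then show "a n * (1 + r'\<^sup>2) powr (- e n) \<le> a n * (1 + r\<^sup>2) powr (- e n)"
      using a0[of n] by (simp add: mult_left_mono)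
  qed
  have Q_mono: "mono_on {0..} Q"
  proof (rule mono_onI)
    fix r r' :: real assume "r \<in> {0..}" "r' \<in> {0..}" "r \<le> r'"
    then have "S r' \<le> S r" by (intro S_anti) auto
    then show "Q r \<le> Q r'" unfolding Q_def
      using S_pos[of r] S_pos[of r'] by (intro divide_left_mono) auto
  qed
  have Q_upper: "Q r \<le> (1 + r\<^sup>2) powr (e n) / a n" for r n
  proof -
    have pos: "0 < a n * (1 + r\<^sup>2) powr (- e n)" using a0[of n] pw by simp
    have "Q r \<le> 1 / (a n * (1 + r\<^sup>2) powr (- e n))" unfolding Q_def
      using S_ge[of n r] pos by (intro divide_left_mono) auto
    also have "\<dots> = (1 + r\<^sup>2) powr (e n) / a n" by (simp add: powr_minus field_simps)
    finally show ?thesis .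
  qed
  have lnQ_upper: "ln (Q r) \<le> e n * ln (1 + r\<^sup>2) - ln (a n)" for r n
  proof -
    have "ln (Q r) \<le> ln ((1 + r\<^sup>2) powr (e n) / a n)"
      using Q_upper[of r n] Q_pos[of r] by simp
    also have "\<dots> = e n * ln (1 + r\<^sup>2) - ln (a n)"
      using a0[of n] pw nz by (simp add: ln_div ln_powr)
    finally show ?thesis .
  qed
  have lim: "((\<lambda>s. ln (Q s) / ln s) \<longlongrightarrow> 0) at_top"
    unfolding tendsto_iff
  proof (intro allI impI)
    fix \<epsilon> :: real assume "0 < \<epsilon>"
    then obtain N where N: "1 / real (Suc N) < \<epsilon> / 4" using nat_approx_posE[of "\<epsilon>/4"] \<open>0 < \<epsilon>\<close> by (metis divide_pos_pos zero_less_numeral)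
    define C where "C = e N * ln 2 - ln (a N)"
    define U where "U = (\<lambda>s. e N * 2 + C / ln s)"
    have "(U \<longlongrightarrow> e N * 2 + 0) at_top"
      unfolding U_def by (intro tendsto_intros lnlim3)
    moreover have "e N * 2 + 0 < \<epsilon>"
    proof -
      have "2 / (1 + real N) \<le> 4 / (1 + real N)" by (rule divide_right_mono) auto
      then show ?thesis using N by (simp add: e_def)
    qed
    ultimately have ev: "eventually (\<lambda>s. U s < \<epsilon>) at_top" by (rule order_tendstoD(2))
    show "eventually (\<lambda>s. dist (ln (Q s) / ln s) 0 < \<epsilon>) at_top"
      using ev eventually_gt_at_top[of 1]
    proof eventually_elim
      case (elim s)
      then have ls: "0 < ln s" by simp
      have "ln (Q s) / ln s \<le> (e N * ln (1 + s\<^sup>2) - ln (a N)) / ln s"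
        using lnQ_upper[of s N] ls by (intro divide_right_mono) auto
      also have "\<dots> \<le> (e N * (ln 2 + 2 * ln s) - ln (a N)) / ln s"
        using lnb[of s] elim e0[of N] ls by (intro divide_right_mono) auto
      also have "\<dots> = U s" unfolding U_def C_def using ls by (simp add: field_simps)
      finally have "ln (Q s) / ln s < \<epsilon>" using elim by simp
      moreover have "0 \<le> ln (Q s) / ln s" using Q_ge1[of s] ls by simp
      ultimately show ?case by simp
    qed
  qed
  have Smeas: "(\<lambda>\<omega>::'a. S (norm \<omega>)) \<in> borel_measurable lborel"
    unfolding S_def by measurable
  have pmeas: "(\<lambda>\<omega>::'a. p \<omega> powr y) \<in> borel_measurable lborel" for y
    unfolding p_def by measurable
  have p_pos: "0 < p \<omega>" for \<omega> using p1[of \<omega>] by simp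
  have int1: "(\<integral>\<^sup>+ \<omega>. ennreal (f \<omega> / Q (norm \<omega>) * p \<omega> powr m) \<partial>lborel) \<le> 1"
  proof -
    define W where "W = (\<lambda>\<omega>::'a. S (norm \<omega>) * p \<omega> powr m)"
    have W_pos: "0 < W \<omega>" for \<omega> unfolding W_def using S_pos[of "norm \<omega>"] p_pos[of \<omega>] by (intro mult_pos_pos) auto
    have Wmeas: "W \<in> borel_measurable lborel" unfolding W_def using Smeas pmeas by measurable
    have eq: "\<And>\<omega>. f \<omega> / Q (norm \<omega>) * p \<omega> powr m = f \<omega> * W \<omega>"
      unfolding Q_def W_def using S_pos by simp
    have "(\<integral>\<^sup>+ \<omega>. ennreal (f \<omega> * W \<omega>) \<partial>lborel) \<le> 1"
    proof (rule nn_integral_le_by_measurable)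
      fix u assume um: "u \<in> borel_measurable lborel" and ule: "\<And>x. u x \<le> ennreal (f x * W x)"
      define v where "v = (\<lambda>\<omega>. u \<omega> * ennreal (1 / W \<omega>))"
      have vm: "v \<in> borel_measurable lborel" unfolding v_def using um Wmeas by measurable
      have vle: "v \<omega> \<le> ennreal (f \<omega>)" for \<omega>
      proof -
        have "v \<omega> \<le> ennreal (f \<omega> * W \<omega>) * ennreal (1 / W \<omega>)"
          unfolding v_def by (intro mult_right_mono ule) auto
        also have "\<dots> = ennreal (f \<omega>)"
          using W_pos[of \<omega>] f0[of \<omega>] by (simp add: ennreal_mult[symmetric])
        finally show ?thesis .
      qed
      define t where "t = (\<lambda>n \<omega>. a n * (1 + (norm \<omega>)\<^sup>2) powr (- e n) * p \<omega> powr m)"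
      have t0: "0 \<le> t n \<omega>" for n \<omega> unfolding t_def using term0 by simp
      have tm: "(\<lambda>\<omega>. ennreal (t n \<omega>)) \<in> borel_measurable lborel" for n
        unfolding t_def p_def by measurable
      have Wsum: "ennreal (W \<omega>) = (\<Sum>n. ennreal (t n \<omega>))" for \<omega>
      proof -
        have "W \<omega> = (\<Sum>n. t n \<omega>)" unfolding W_def S_def t_def
          by (rule suminf_mult2) (rule summ)
        moreover have "summable (\<lambda>n. t n \<omega>)" unfolding t_def
          by (rule summable_mult2) (rule summ)
        ultimately show ?thesis using t0 by (simp add: suminf_ennreal2)
      qed
      have ueq: "u \<omega> = (\<Sum>n. v \<omega> * ennreal (t n \<omega>))" for \<omega>
      proof -
        have "u \<omega> = v \<omega> * ennreal (W \<omega>)"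
          unfolding v_def using W_pos[of \<omega>]
          by (simp add: mult.assoc ennreal_mult[symmetric])
        then show ?thesis by (simp add: Wsum)
      qed
      have tn: "t n \<omega> = a n * p \<omega> powr (m - e n)" for n \<omega>
        unfolding t_def p_def by (simp add: powr_diff powr_minus field_simps)
      have bound: "(\<integral>\<^sup>+ \<omega>. v \<omega> * ennreal (t n \<omega>) \<partial>lborel) \<le> ennreal ((1/2)^Suc n)" for n
      proof -
        have "(\<integral>\<^sup>+ \<omega>. v \<omega> * ennreal (t n \<omega>) \<partial>lborel)
            = (\<integral>\<^sup>+ \<omega>. ennreal (a n) * (v \<omega> * ennreal (p \<omega> powr (m - e n))) \<partial>lborel)"
          using a0[of n] by (simp add: tn ennreal_mult mult.commute mult.left_commute)
        also have "\<dots> = ennreal (a n) * (\<integral>\<^sup>+ \<omega>. v \<omega> * ennreal (p \<omega> powr (m - e n)) \<partial>lborel)"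
          using vm pmeas[of "m - e n"]
          by (intro nn_integral_cmult borel_measurable_times_ennreal measurable_compose[OF _ measurable_ennreal]) auto
        also have "\<dots> \<le> ennreal (a n) * c n"
          unfolding c_def using vle f0
          by (intro mult_left_mono nn_integral_mono) (auto simp: ennreal_mult intro: mult_right_mono)
        also have "\<dots> \<le> ennreal ((1/2)^Suc n)" by (rule ac)
        finally show ?thesis .
      qed
      have "integral\<^sup>N lborel u = (\<integral>\<^sup>+ \<omega>. (\<Sum>n. v \<omega> * ennreal (t n \<omega>)) \<partial>lborel)"
        by (rule arg_cong[where f="integral\<^sup>N lborel"]) (rule ext, rule ueq)
      also have "\<dots> = (\<Sum>n. \<integral>\<^sup>+ \<omega>. v \<omega> * ennreal (t n \<omega>) \<partial>lborel)"
        using vm tm by (intro nn_integral_suminf borel_measurable_times_ennreal) auto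
      also have "\<dots> \<le> (\<Sum>n. ennreal ((1/2)^Suc n))"
        by (intro suminf_le bound summableI)
      also have "\<dots> = 1" using half_pow_sum by (simp add: suminf_ennreal2)
      finally show "integral\<^sup>N lborel u \<le> 1" .
    qed
    then show ?thesis by (simp only: eq)
  qed
  have int2: "(\<integral>\<^sup>+ \<omega>. ennreal (f \<omega> / Q (norm \<omega>) * p \<omega> powr (m + \<delta>)) \<partial>lborel) = \<infinity>"
    if dpos: "\<delta> > 0" for \<delta>
  proof -
    obtain N where N: "1 / real (Suc N) < \<delta>" using nat_approx_posE[OF dpos] by metis
    have "(\<integral>\<^sup>+ \<omega>. ennreal (a N * (f \<omega> * p \<omega> powr m)) \<partial>lborel) = \<infinity>"
      by (rule nn_integral_cmult_top[OF a0 inf]) (use f0 in simp)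
    moreover have "(\<integral>\<^sup>+ \<omega>. ennreal (a N * (f \<omega> * p \<omega> powr m)) \<partial>lborel)
        \<le> (\<integral>\<^sup>+ \<omega>. ennreal (f \<omega> / Q (norm \<omega>) * p \<omega> powr (m + \<delta>)) \<partial>lborel)"
    proof (intro nn_integral_mono ennreal_leI)
      fix \<omega> :: 'a
      have ge1: "1 \<le> p \<omega> powr (\<delta> - e N)"
        using N p1[of \<omega>] by (intro ge_one_powr_ge_zero) (auto simp: e_def)
      have "a N * (f \<omega> * p \<omega> powr m) \<le> a N * (f \<omega> * p \<omega> powr m) * p \<omega> powr (\<delta> - e N)"
      proof -
        have x0: "0 \<le> a N * (f \<omega> * p \<omega> powr m)" using a0[of N] f0[of \<omega>] by simp
        show ?thesis using mult_left_mono[OF ge1 x0] by simp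
      qed
      also have "\<dots> = f \<omega> * (a N * p \<omega> powr (- e N)) * p \<omega> powr (m + \<delta>)"
        using p_pos[of \<omega>] by (simp add: powr_add powr_diff powr_minus field_simps)
      also have "\<dots> \<le> f \<omega> * S (norm \<omega>) * p \<omega> powr (m + \<delta>)"
        using S_ge[of N "norm \<omega>"] f0[of \<omega>] unfolding p_def
        by (intro mult_right_mono mult_left_mono) auto
      also have "\<dots> = f \<omega> / Q (norm \<omega>) * p \<omega> powr (m + \<delta>)"
        unfolding Q_def using S_pos by simp
      finally show "a N * (f \<omega> * p \<omega> powr m) \<le> f \<omega> / Q (norm \<omega>) * p \<omega> powr (m + \<delta>)" .
    qed
    ultimately show ?thesis by (simp add: top_unique)
  qed
  have int1': "(\<integral>\<^sup>+ \<omega>. ennreal ((cmod (fourier_L2 g \<omega>))\<^sup>2 / Q (norm \<omega>) *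
        (1 + (norm \<omega>)\<^sup>2) powr real_of_ereal (smoothness g)) \<partial>lborel) \<le> 1"
    using int1 unfolding f_def p_def m_def .
  have int2': "\<forall>\<delta>>0. (\<integral>\<^sup>+ \<omega>. ennreal ((cmod (fourier_L2 g \<omega>))\<^sup>2 / Q (norm \<omega>) *
        (1 + (norm \<omega>)\<^sup>2) powr (real_of_ereal (smoothness g) + \<delta>)) \<partial>lborel) = \<infinity>"
    using int2 unfolding f_def p_def m_def by blast
  have Qp: "\<forall>s\<ge>0. Q s > 0" using Q_pos by blast
  show ?thesis
    by (rule exI[of _ Q], intro conjI, rule Q_mono, rule Qp, rule lim, rule int1', rule int2')
qed
end
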